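(* Let $A$ be an $n\times n$ irreducible nonnegative matrix with largest eigenvalue $1$ and positive $w$ with $Aw=w$, $A^Tw=w$, and let $\tilde A=\frac12(A+A^T)$. Then for every nonempty $U\subsetneq[n]$ and every $b\in\mathbb R^{|U|}$, \[ \operatorname{cap}_{U,b}(\tilde A)\le\operatorname{cap}_{U,b}(A). \]
   Context: For an irreducible nonnegative $n\times n$ matrix $B$ with PF eigenvalue $1$ and a positive vector $w$ with $Bw=w$, $B^Tw=w$, set $L=I-B$. For nonempty $U\subsetneq[n]$ and $b\in\mathbb R^{|U|}$ (indexed by $U$), there is a unique $q\in\mathbb R^n$ with $q_i=w_ib_i$ for $i\in U$ and $(Lq)_i=0$ for $i\notin U$; the capacity is $\operatorname{cap}_{U,b}(B)=\langle q,Lq\rangle$. *)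

theory Defs
  imports "HOL-Analysis.Analysis"
begin

fun mat_pow :: "real^'n^'n \<Rightarrow> nat \<Rightarrow> real^'n^'n" where
  "mat_pow A 0 = mat 1"
| "mat_pow A (Suc k) = A ** mat_pow A k"

definition nonneg_matrix :: "real^'n^'n \<Rightarrow> bool" where
  "nonneg_matrix A \<longleftrightarrow> (\<forall>i j. A $ i $ j \<ge> 0)"

definition irreducible_nonneg :: "real^'n^'n \<Rightarrow> bool" where
  "irreducible_nonneg A \<longleftrightarrow> nonneg_matrix A \<and> (\<forall>i j. \<exists>k. mat_pow A k $ i $ j > 0)"

definition complex_eigenvalue :: "real^'n^'n \<Rightarrow> complex \<Rightarrow> bool" where
  "complex_eigenvalue A c \<longleftrightarrow>
     (\<exists>v :: complex^'n. v \<noteq> 0 \<and> (\<chi> i j. complex_of_real (A $ i $ j)) *v v = c *s v)"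

definition largest_eigenvalue_one :: "real^'n^'n \<Rightarrow> bool" where
  "largest_eigenvalue_one A \<longleftrightarrow>
     complex_eigenvalue A 1 \<and> (\<forall>c. complex_eigenvalue A c \<longrightarrow> cmod c \<le> 1)"

text \<open>Capacity. b is given as a function on indices; only its values on U matter.
  q is the unique vector with q_i = w_i b_i on U and (L q)_i = 0 off U, L = I - B.\<close>
definition cap :: "'n set \<Rightarrow> ('n \<Rightarrow> real) \<Rightarrow> real^'n \<Rightarrow> real^'n^'n \<Rightarrow> real" where
  "cap U b w B =
     (let L = mat 1 - B;
          q = (THE q. (\<forall>i\<in>U. q $ i = w $ i * b i) \<and> (\<forall>i. i \<notin> U \<longrightarrow> (L *v q) $ i = 0))
      in q \<bullet> (L *v q))"

end

theory Submission
  imports Defs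
begin

lemma mv_comp: "(B *v x) $ i = (\<Sum>j\<in>UNIV. B $ i $ j * x $ j)"
  by (simp add: matrix_vector_mult_def)

lemma inner_sum: "(x::real^'n) \<bullet> y = (\<Sum>i\<in>UNIV. x $ i * y $ i)"
  by (simp add: inner_vec_def)

lemma mat_pow_nonneg:
  assumes "nonneg_matrix A"
  shows "mat_pow A k $ i $ j \<ge> 0"
proof (induction k arbitrary: i)
  case 0
  then show ?case by (simp add: mat_def)
next
  case (Suc k)
  have "(A ** mat_pow A k) $ i $ j = (\<Sum>l\<in>UNIV. A $ i $ l * mat_pow A k $ l $ j)"
    by (simp add: matrix_matrix_mult_def)
  also have "\<dots> \<ge> 0"
    using assms Suc unfolding nonneg_matrix_def by (intro sum_nonneg) simp
  finally show ?case by simp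
qed

lemma closed_reach:
  assumes nn: "nonneg_matrix A"
    and cl: "\<forall>i j. i \<in> S \<and> A $ i $ j > 0 \<longrightarrow> j \<in> S"
  shows "i \<in> S \<Longrightarrow> mat_pow A k $ i $ j > 0 \<Longrightarrow> j \<in> S"
proof (induction k arbitrary: i)
  case 0
  then show ?case by (simp add: mat_def split: if_splits)
next
  case (Suc k)
  have "0 < (\<Sum>l\<in>UNIV. A $ i $ l * mat_pow A k $ l $ j)"
    using Suc.prems by (simp add: matrix_matrix_mult_def)
  then obtain l where l: "A $ i $ l * mat_pow A k $ l $ j > 0"
    by (meson not_le sum_nonpos)
  have "A $ i $ l \<ge> 0" "mat_pow A k $ l $ j \<ge> 0"
    using nn mat_pow_nonneg[OF nn] unfolding nonneg_matrix_def by auto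
  with l have "A $ i $ l > 0" "mat_pow A k $ l $ j > 0"
    by (auto simp: zero_less_mult_iff)
  with cl Suc.prems have "l \<in> S" by blast
  then show ?case using Suc.IH \<open>mat_pow A k $ l $ j > 0\<close> by blast
qed

lemma uniq0:
  fixes B :: "real^'n^'n" and w d :: "real^'n"
  assumes nn: "\<forall>i j. B $ i $ j \<ge> 0"
    and Bw: "B *v w = w" and wpos: "\<forall>i. w $ i > 0"
    and conn: "\<And>S i j. (\<forall>i j. i\<in>S \<and> B$i$j>0 \<longrightarrow> j\<in>S) \<Longrightarrow> i\<in>S \<Longrightarrow> j\<in>S"
    and U: "U \<noteq> {}"
    and dU: "\<forall>i\<in>U. d $ i = 0"
    and dL: "\<forall>i. i \<notin> U \<longrightarrow> ((mat 1 - B) *v d) $ i = 0"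
  shows "d = 0"
proof -
  define r where "r i = \<bar>d $ i\<bar> / w $ i" for i
  define m where "m = Max (range r)"
  have rm: "r i \<le> m" for i unfolding m_def by simp
  have r0: "r i \<ge> 0" for i unfolding r_def using wpos by (simp add: less_imp_le)
  have dr: "\<bar>d $ i\<bar> = r i * w $ i" for i unfolding r_def using wpos
    by (simp add: less_imp_neq[symmetric])
  have "m \<le> 0"
  proof (rule ccontr)
    assume "\<not> m \<le> 0"
    hence mpos: "m > 0" by simp
    define S where "S = {i. r i = m}"
    have "m \<in> range r" unfolding m_def by (intro Max_in) auto
    then obtain i0 where "r i0 = m" by auto
    hence i0S: "i0 \<in> S" unfolding S_def by simp
    have cl: "\<forall>i j. i\<in>S \<and> B$i$j>0 \<longrightarrow> j\<in>S"
    proof (intro allI impI)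
      fix i j assume a: "i \<in> S \<and> B$i$j > 0"
      hence ri: "r i = m" unfolding S_def by simp
      hence "d $ i \<noteq> 0" using mpos r_def by auto
      hence "i \<notin> U" using dU by auto
      hence "d $ i = (B *v d) $ i" using dL[rule_format, of i]
        by (simp add: matrix_vector_mult_diff_rdistrib matrix_vector_mul_lid)
      hence "\<bar>d $ i\<bar> = \<bar>\<Sum>j\<in>UNIV. B $ i $ j * d $ j\<bar>" by (simp add: mv_comp)
      also have "\<dots> \<le> (\<Sum>j\<in>UNIV. \<bar>B $ i $ j * d $ j\<bar>)" by (rule sum_abs)
      also have "\<dots> = (\<Sum>j\<in>UNIV. B $ i $ j * (r j * w $ j))"
        using nn by (intro sum.cong) (auto simp: abs_mult dr)
      finally have le1: "\<bar>d $ i\<bar> \<le> (\<Sum>j\<in>UNIV. B $ i $ j * (r j * w $ j))" .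
      have "(\<Sum>j\<in>UNIV. B $ i $ j * (m * w $ j)) = m * (B *v w) $ i"
        by (simp add: mv_comp sum_distrib_left algebra_simps)
      also have "\<dots> = \<bar>d $ i\<bar>" using Bw ri dr[of i] by simp
      finally have "(\<Sum>j\<in>UNIV. B $ i $ j * (m * w $ j)) - (\<Sum>j\<in>UNIV. B $ i $ j * (r j * w $ j)) \<le> 0"
        using le1 by simp
      hence "(\<Sum>j\<in>UNIV. B $ i $ j * ((m - r j) * w $ j)) \<le> 0"
        by (simp add: sum_subtractf[symmetric] algebra_simps)
      moreover have nnt: "\<forall>j\<in>UNIV. B $ i $ j * ((m - r j) * w $ j) \<ge> 0"
        using nn rm wpos by (simp add: less_imp_le)
      ultimately have "(\<Sum>j\<in>UNIV. B $ i $ j * ((m - r j) * w $ j)) = 0"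
        by (meson sum_nonneg order_antisym)
      hence "\<forall>j\<in>UNIV. B $ i $ j * ((m - r j) * w $ j) = 0"
        using nnt by (simp add: sum_nonneg_eq_0_iff)
      hence "B $ i $ j * ((m - r j) * w $ j) = 0" by simp
      thus "j \<in> S" using a wpos[rule_format, of j] unfolding S_def by auto
    qed
    from U obtain u where "u \<in> U" by auto
    have "u \<in> S" using conn[OF cl i0S] .
    hence "r u = m" unfolding S_def by simp
    moreover have "r u = 0" using dU \<open>u \<in> U\<close> r_def by simp
    ultimately show False using mpos by simp
  qed
  hence "r i = 0" for i using rm[of i] r0[of i] by simp
  hence "d $ i = 0" for i using dr[of i] by simp
  thus "d = 0" by (simp add: vec_eq_iff)
qed

lemma exists_sol:
  fixes B :: "real^'n^'n" and w :: "real^'n"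
  assumes nn: "\<forall>i j. B $ i $ j \<ge> 0"
    and Bw: "B *v w = w" and wpos: "\<forall>i. w $ i > 0"
    and conn: "\<And>S i j. (\<forall>i j. i\<in>S \<and> B$i$j>0 \<longrightarrow> j\<in>S) \<Longrightarrow> i\<in>S \<Longrightarrow> j\<in>S"
    and U: "U \<noteq> {}"
  shows "\<exists>!q. (\<forall>i\<in>U. q $ i = c i) \<and> (\<forall>i. i \<notin> U \<longrightarrow> ((mat 1 - B) *v q) $ i = 0)"
proof -
  define T where "T x = (\<chi> i. if i \<in> U then x $ i else ((mat 1 - B) *v x) $ i)" for x :: "real^'n"
  have lin: "linear T"
    by (rule linearI) (auto simp: T_def vec_eq_iff matrix_vector_right_distrib matrix_vector_mult_scaleR)
  have zero: "T x = 0 \<Longrightarrow> x = 0" for x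
    by (rule uniq0[OF nn Bw wpos conn U]) (auto simp: T_def vec_eq_iff, metis, metis)
  have "inj T"
  proof (rule injI)
    fix x y assume "T x = T y"
    hence "T (x - y) = 0" using linear_diff[OF lin] by simp
    thus "x = y" using zero[of "x - y"] by simp
  qed
  hence "surj T" using linear_injective_imp_surjective[OF lin] by blast
  then obtain q where q: "T q = (\<chi> i. if i \<in> U then c i else 0)" by (metis surjD)
  show ?thesis
  proof (rule ex1I[of _ q])
    show "(\<forall>i\<in>U. q $ i = c i) \<and> (\<forall>i. i \<notin> U \<longrightarrow> ((mat 1 - B) *v q) $ i = 0)"
      using q by (auto simp: T_def vec_eq_iff) (metis, metis)
  next
    fix y assume y: "(\<forall>i\<in>U. y $ i = c i) \<and> (\<forall>i. i \<notin> U \<longrightarrow> ((mat 1 - B) *v y) $ i = 0)"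
    have "T y = T q" using q y by (auto simp: T_def vec_eq_iff)
    thus "y = q" using \<open>inj T\<close> by (simp add: inj_eq)
  qed
qed


lemma transp_inner: "(x::real^'n) \<bullet> (B *v y) = (transpose B *v x) \<bullet> y"
  by (simp add: inner_sum mv_comp transpose_def sum_distrib_left sum_distrib_right
      algebra_simps) (rule sum.swap)

lemma As_mv: "((1/2) *\<^sub>R (A + transpose A)) *v x = (1/2) *\<^sub>R (A *v x + transpose A *v (x::real^'n))"
  by (simp add: vec_eq_iff mv_comp sum.distrib sum_distrib_left algebra_simps del: transpose_matrix_vector)

lemma quad:
  fixes A :: "real^'n^'n" and w x :: "real^'n"
  assumes nn: "\<forall>i j. A $ i $ j \<ge> 0"
    and Aw: "A *v w = w" and ATw: "transpose A *v w = w" and wpos: "\<forall>i. w $ i > 0"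
  shows "x \<bullet> (A *v x) \<le> x \<bullet> x"
proof -
  have key: "x$i * (A$i$j * x$j) \<le> A$i$j * (x$i^2 * w$j / w$i + x$j^2 * w$i / w$j) / 2" for i j
  proof -
    have wi: "w$i > 0" and wj: "w$j > 0" using wpos by auto
    have "2 * (x$i * x$j) * (w$i * w$j) \<le> x$i^2 * w$j^2 + x$j^2 * w$i^2"
    proof -
      have "0 \<le> (x$i*w$j - x$j*w$i)^2" by simp
      moreover have "(x$i*w$j - x$j*w$i)^2 = x$i^2*w$j^2 + x$j^2*w$i^2 - 2*(x$i*x$j)*(w$i*w$j)"
        by (simp add: power2_eq_square algebra_simps)
      ultimately show ?thesis by linarith
    qed
    hence "2 * (x$i * x$j) \<le> (x$i^2 * w$j^2 + x$j^2 * w$i^2) / (w$i * w$j)"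
      using wi wj by (simp add: pos_le_divide_eq)
    also have "\<dots> = x$i^2 * w$j / w$i + x$j^2 * w$i / w$j"
      using wi wj by (simp add: field_simps power2_eq_square)
    finally have "x$i * x$j \<le> (x$i^2 * w$j / w$i + x$j^2 * w$i / w$j) / 2" by simp
    from mult_left_mono[OF this nn[rule_format, of i j]]
    show ?thesis by (simp add: algebra_simps)
  qed
  have "x \<bullet> (A *v x) = (\<Sum>i\<in>UNIV. \<Sum>j\<in>UNIV. x$i * (A$i$j * x$j))"
    by (simp add: inner_sum mv_comp sum_distrib_left)
  also have "\<dots> \<le> (\<Sum>i\<in>UNIV. \<Sum>j\<in>UNIV. A$i$j * (x$i^2 * w$j / w$i + x$j^2 * w$i / w$j) / 2)"
    by (intro sum_mono key)
  also have "\<dots> = ((\<Sum>i\<in>UNIV. \<Sum>j\<in>UNIV. A$i$j * w$j * (x$i^2 / w$i))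
      + (\<Sum>j\<in>UNIV. \<Sum>i\<in>UNIV. A$i$j * w$i * (x$j^2 / w$j))) / 2"
  proof -
    have "(\<Sum>i\<in>UNIV. \<Sum>j\<in>UNIV. A$i$j * (x$i^2 * w$j / w$i + x$j^2 * w$i / w$j) / 2)
       = (\<Sum>i\<in>UNIV. \<Sum>j\<in>UNIV. (A$i$j * w$j * (x$i^2 / w$i) + A$i$j * w$i * (x$j^2 / w$j)) / 2)"
      by (intro sum.cong refl) (simp add: algebra_simps)
    also have "\<dots> = ((\<Sum>i\<in>UNIV. \<Sum>j\<in>UNIV. A$i$j * w$j * (x$i^2 / w$i))
      + (\<Sum>i\<in>UNIV. \<Sum>j\<in>UNIV. A$i$j * w$i * (x$j^2 / w$j))) / 2"
      by (simp only: add_divide_distrib sum.distrib sum_divide_distrib)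
    also have "(\<Sum>i\<in>UNIV. \<Sum>j\<in>UNIV. A$i$j * w$i * (x$j^2 / w$j))
       = (\<Sum>j\<in>UNIV. \<Sum>i\<in>UNIV. A$i$j * w$i * (x$j^2 / w$j))"
      by (rule sum.swap)
    finally show ?thesis .
  qed
  also have "(\<Sum>i\<in>UNIV. \<Sum>j\<in>UNIV. A$i$j * w$j * (x$i^2 / w$i)) = (\<Sum>i\<in>UNIV. (A *v w)$i * (x$i^2 / w$i))"
    by (simp add: mv_comp sum_distrib_right sum_divide_distrib)
  also have "\<dots> = (\<Sum>i\<in>UNIV. x$i^2)"
    using Aw wpos by (intro sum.cong) (auto simp: less_imp_neq[symmetric])
  also have "(\<Sum>j\<in>UNIV. \<Sum>i\<in>UNIV. A$i$j * w$i * (x$j^2 / w$j)) = (\<Sum>j\<in>UNIV. (transpose A *v w)$j * (x$j^2 / w$j))"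
    by (simp add: mv_comp sum_distrib_right transpose_def sum_divide_distrib)
  also have "\<dots> = (\<Sum>i\<in>UNIV. x$i^2)"
    using ATw wpos by (intro sum.cong) (auto simp: less_imp_neq[symmetric])
  finally show ?thesis by (simp add: inner_sum power2_eq_square)
qed

lemma cap_eq:
  assumes "\<exists>!q. (\<forall>i\<in>U. q $ i = w $ i * b i) \<and> (\<forall>i. i \<notin> U \<longrightarrow> ((mat 1 - B) *v q) $ i = 0)"
    and "(\<forall>i\<in>U. q $ i = w $ i * b i) \<and> (\<forall>i. i \<notin> U \<longrightarrow> ((mat 1 - B) *v q) $ i = 0)"
  shows "cap U b w B = q \<bullet> ((mat 1 - B) *v q)"
proof -
  have "(THE q. (\<forall>i\<in>U. q $ i = w $ i * b i) \<and> (\<forall>i. i \<notin> U \<longrightarrow> ((mat 1 - B) *v q) $ i = 0)) = q"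
    using the1_equality[OF assms] .
  thus ?thesis unfolding cap_def Let_def by simp
qed

theorem lemma5p23:
  fixes A :: "real^'n^'n" and w :: "real^'n" and U :: "'n set" and b :: "'n \<Rightarrow> real"
  assumes "irreducible_nonneg A"
    and "largest_eigenvalue_one A"
    and "\<forall>i. w $ i > 0"
    and "A *v w = w"
    and "transpose A *v w = w"
    and "U \<noteq> {}" and "U \<noteq> UNIV"
  shows "cap U b w ((1/2) *\<^sub>R (A + transpose A)) \<le> cap U b w A"
proof -
  note irr = assms(1) and wpos = assms(3) and Aw = assms(4) and ATw = assms(5) and U = assms(6)
  define As where "As = (1/2) *\<^sub>R (A + transpose A)"
  have nnm: "nonneg_matrix A" using irr unfolding irreducible_nonneg_def by simp
  hence nn: "\<forall>i j. A $ i $ j \<ge> 0" unfolding nonneg_matrix_def by simp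
  have Asc: "As $ i $ j = (A $ i $ j + A $ j $ i) / 2" for i j
    unfolding As_def by (simp add: transpose_def)
  have nns: "\<forall>i j. As $ i $ j \<ge> 0"
  proof (intro allI)
    fix i j show "As $ i $ j \<ge> 0" using nn[rule_format, of i j] nn[rule_format, of j i] Asc[of i j] by simp
  qed
  have "As *v w = (1/2) *\<^sub>R (A *v w + transpose A *v w)" unfolding As_def
    by (simp add: vec_eq_iff mv_comp sum.distrib sum_distrib_left algebra_simps del: transpose_matrix_vector)
  hence Asw: "As *v w = w" using Aw ATw by simp
  have connA: "j \<in> S" if cl: "\<forall>i j. i\<in>S \<and> A$i$j>0 \<longrightarrow> j\<in>S" and iS: "i \<in> S" for S i j
  proof -
    obtain k where "mat_pow A k $ i $ j > 0" using irr unfolding irreducible_nonneg_def by blast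
    thus ?thesis using closed_reach[OF nnm cl iS] by blast
  qed
  have connS: "j \<in> S" if cl: "\<forall>i j. i\<in>S \<and> As$i$j>0 \<longrightarrow> j\<in>S" and iS: "i \<in> S" for S i j
  proof -
    have "\<forall>i j. i\<in>S \<and> A$i$j>0 \<longrightarrow> j\<in>S"
    proof (intro allI impI)
      fix i j assume "i\<in>S \<and> A$i$j>0"
      moreover hence "As$i$j > 0" using Asc[of i j] nn[rule_format, of j i] by simp
      ultimately show "j \<in> S" using cl by blast
    qed
    thus ?thesis using connA iS by blast
  qed
  let ?P = "\<lambda>B q. (\<forall>i\<in>U. q $ i = w $ i * b i) \<and> (\<forall>i. i \<notin> U \<longrightarrow> ((mat 1 - B) *v q) $ i = 0)"
  have exA: "\<exists>!q. ?P A q" by (rule exists_sol[OF nn Aw wpos connA U])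
  have exS: "\<exists>!q. ?P As q" by (rule exists_sol[OF nns Asw wpos connS U])
  obtain qA where qA: "?P A qA" using exA by blast
  obtain qS where qS: "?P As qS" using exS by blast
  have capA: "cap U b w A = qA \<bullet> ((mat 1 - A) *v qA)" by (rule cap_eq[OF exA qA])
  have capS: "cap U b w As = qS \<bullet> ((mat 1 - As) *v qS)" by (rule cap_eq[OF exS qS])
  define M where "M = mat 1 - As"
  have TT: "transpose (transpose A) = A" by simp
  have xAT: "x \<bullet> (transpose A *v x) = x \<bullet> (A *v x)" for x
    using transp_inner[of x "transpose A" x] by (simp add: inner_commute)
  have xAs: "x \<bullet> (As *v x) = x \<bullet> (A *v x)" for x
    unfolding As_def As_mv using xAT[of x]
    by (simp add: inner_add_right del: transpose_matrix_vector)
  have QA: "x \<bullet> ((mat 1 - A) *v x) = x \<bullet> (M *v x)" for x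
    unfolding M_def using xAs[of x]
    by (simp add: matrix_vector_mult_diff_rdistrib matrix_vector_mul_lid inner_diff_right)
  have Msym: "transpose M = M" unfolding M_def As_def
    by (simp add: vec_eq_iff transpose_def mat_def)
  define d where "d = qA - qS"
  have dU: "\<forall>i\<in>U. d $ i = 0" using qA qS by (simp add: d_def)
  have dM: "d \<bullet> (M *v qS) = 0"
    unfolding inner_sum using dU qS[unfolded M_def[symmetric]] by (intro sum.neutral) auto
  have dMd: "d \<bullet> (M *v d) \<ge> 0"
    using quad[OF nn Aw ATw wpos, of d] xAs[of d]
    by (simp add: M_def matrix_vector_mult_diff_rdistrib matrix_vector_mul_lid inner_diff_right)
  have sw: "qS \<bullet> (M *v d) = d \<bullet> (M *v qS)"
    using transp_inner[of qS M d] Msym by (simp add: inner_commute)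
  have "qA = qS + d" by (simp add: d_def)
  hence "qA \<bullet> (M *v qA) = qS \<bullet> (M *v qS) + qS \<bullet> (M *v d) + d \<bullet> (M *v qS) + d \<bullet> (M *v d)"
    by (simp add: matrix_vector_right_distrib inner_add_left inner_add_right)
  hence "qA \<bullet> (M *v qA) \<ge> qS \<bullet> (M *v qS)" using sw dM dMd by simp
  thus ?thesis using capA capS QA[of qA] unfolding As_def M_def by simp
qed

end
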